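(* If $G$ is a median graph that isometrically embeds into the hypercube $Q_n$, then $c(G) \leq \left\lceil \frac{n+1}{2} \right\rceil$.
   Context: $Q_n$ is the graph on $\{0,1\}^n$ with two strings adjacent iff they differ in exactly one position. A graph $G$ is a median graph if for every triple $u,v,w \in V(G)$ there is a unique vertex $m$ with $d(u,m)+d(m,v) = d(u,v)$, $d(u,m)+d(m,w)=d(u,w)$, $d(v,m)+d(m,w)=d(v,w)$. $G$ isometrically embeds into $Q_n$ if it is isomorphic to an induced subgraph $H$ of $Q_n$ with $d_H(x,y) = d_{Q_n}(x,y)$ for all $x,y \in V(H)$. Cops and Robbers: $k$ cops choose starting vertices, then the robber does; in each round all cops move (to a neighbor or stay), then the robber moves (to a neighbor or stays); cops win if some cop occupies the robber's vertex. The cop number $c(G)$ is the minimum $k$ for which the cops can guarantee capture. *)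

theory Defs
  imports Main "HOL-Library.Extended_Nat"
begin

definition graph :: "'a set \<Rightarrow> ('a \<Rightarrow> 'a \<Rightarrow> bool) \<Rightarrow> bool" where
  "graph V E \<longleftrightarrow> (\<forall>x y. E x y \<longrightarrow> x \<in> V \<and> y \<in> V) \<and> (\<forall>x y. E x y \<longrightarrow> E y x)
                   \<and> (\<forall>x. \<not> E x x)"

definition is_walk :: "('a \<Rightarrow> 'a \<Rightarrow> bool) \<Rightarrow> 'a \<Rightarrow> 'a \<Rightarrow> 'a list \<Rightarrow> bool" where
  "is_walk E u v xs \<longleftrightarrow> xs \<noteq> [] \<and> hd xs = u \<and> last xs = v
      \<and> (\<forall>i. Suc i < length xs \<longrightarrow> E (xs ! i) (xs ! Suc i))"

definition gdist :: "('a \<Rightarrow> 'a \<Rightarrow> bool) \<Rightarrow> 'a \<Rightarrow> 'a \<Rightarrow> enat" where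
  "gdist E u v = (INF xs \<in> {xs. is_walk E u v xs}. enat (length xs - 1))"

definition connected_graph :: "'a set \<Rightarrow> ('a \<Rightarrow> 'a \<Rightarrow> bool) \<Rightarrow> bool" where
  "connected_graph V E \<longleftrightarrow> (\<forall>u\<in>V. \<forall>v\<in>V. gdist E u v \<noteq> \<infinity>)"

definition median_graph :: "'a set \<Rightarrow> ('a \<Rightarrow> 'a \<Rightarrow> bool) \<Rightarrow> bool" where
  "median_graph V E \<longleftrightarrow> graph V E \<and> connected_graph V E \<and>
     (\<forall>u\<in>V. \<forall>v\<in>V. \<forall>w\<in>V. \<exists>!m. m \<in> V
        \<and> gdist E u m + gdist E m v = gdist E u v
        \<and> gdist E u m + gdist E m w = gdist E u w
        \<and> gdist E v m + gdist E m w = gdist E v w)"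

definition Q_vert :: "nat \<Rightarrow> bool list set" where
  "Q_vert n = {xs. length xs = n}"

definition Q_adj :: "nat \<Rightarrow> bool list \<Rightarrow> bool list \<Rightarrow> bool" where
  "Q_adj n xs ys \<longleftrightarrow> length xs = n \<and> length ys = n
      \<and> card {i. i < n \<and> xs ! i \<noteq> ys ! i} = 1"

text \<open>G isometrically embeds into Q_n: G is isomorphic (via f) to the induced subgraph
H of Q_n on f ` V, and distances in H agree with distances in Q_n.  Since H is the
isomorphic image of G, d_H(f x, f y) = d_G(x, y).\<close>

definition isometric_embeds_in_Q :: "'a set \<Rightarrow> ('a \<Rightarrow> 'a \<Rightarrow> bool) \<Rightarrow> nat \<Rightarrow> bool" where
  "isometric_embeds_in_Q V E n \<longleftrightarrow> (\<exists>f. inj_on f V \<and> f ` V \<subseteq> Q_vert n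
      \<and> (\<forall>x\<in>V. \<forall>y\<in>V. E x y \<longleftrightarrow> Q_adj n (f x) (f y))
      \<and> (\<forall>x\<in>V. \<forall>y\<in>V. gdist E x y = gdist (Q_adj n) (f x) (f y)))"

definition cop_step :: "('a \<Rightarrow> 'a \<Rightarrow> bool) \<Rightarrow> 'a list \<Rightarrow> 'a list \<Rightarrow> bool" where
  "cop_step E C C' \<longleftrightarrow> list_all2 (\<lambda>a b. b = a \<or> E a b) C C'"

text \<open>cops_win_from V E C r: it is the cops' turn, cops at C, robber at r (not captured);
the cops can force capture in finitely many rounds (attractor of the reachability game).\<close>

inductive cops_win_from :: "'a set \<Rightarrow> ('a \<Rightarrow> 'a \<Rightarrow> bool) \<Rightarrow> 'a list \<Rightarrow> 'a \<Rightarrow> bool"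
  for V E where
  "cop_step E C C' \<Longrightarrow>
   (r \<in> set C' \<or> (\<forall>r'. (r' = r \<or> E r r') \<longrightarrow> r' \<in> set C' \<or> cops_win_from V E C' r'))
   \<Longrightarrow> cops_win_from V E C r"

definition cops_win :: "'a set \<Rightarrow> ('a \<Rightarrow> 'a \<Rightarrow> bool) \<Rightarrow> nat \<Rightarrow> bool" where
  "cops_win V E k \<longleftrightarrow> (\<exists>C. length C = k \<and> set C \<subseteq> V \<and>
      (\<forall>r\<in>V. r \<in> set C \<or> cops_win_from V E C r))"

definition cop_number :: "'a set \<Rightarrow> ('a \<Rightarrow> 'a \<Rightarrow> bool) \<Rightarrow> nat" where
  "cop_number V E = (LEAST k. cops_win V E k)"

end

theory Submission
  imports Defs
begin

definition Dset :: "bool list \<Rightarrow> bool list \<Rightarrow> nat set" where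
  "Dset x y = {j. j < length x \<and> x ! j \<noteq> y ! j}"

definition ham :: "bool list \<Rightarrow> bool list \<Rightarrow> nat" where
  "ham x y = card (Dset x y)"

definition flip :: "bool list \<Rightarrow> nat \<Rightarrow> bool list" where
  "flip x j = x[j := \<not> x ! j]"

definition near :: "bool list \<Rightarrow> bool list \<Rightarrow> bool" where
  "near x y \<longleftrightarrow> x = y \<or> ham x y = 1"

fun maj :: "bool list \<Rightarrow> bool list \<Rightarrow> bool list \<Rightarrow> bool list" where
  "maj (a # x) (b # y) (c # z) = ((a \<and> b) \<or> (b \<and> c) \<or> (a \<and> c)) # maj x y z"
| "maj _ _ _ = []"

lemma finite_Dset[simp]: "finite (Dset x y)"
  unfolding Dset_def by auto

lemma Dset_sym: "length x = length y \<Longrightarrow> Dset x y = Dset y x"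
  unfolding Dset_def by auto

lemma ham_sym: "length x = length y \<Longrightarrow> ham x y = ham y x"
  unfolding ham_def using Dset_sym by metis

lemma Dset_self[simp]: "Dset x x = {}"
  unfolding Dset_def by auto

lemma ham_self[simp]: "ham x x = 0"
  unfolding ham_def by simp

lemma ham_0_iff: "length x = length y \<Longrightarrow> ham x y = 0 \<longleftrightarrow> x = y"
  unfolding ham_def Dset_def by (auto simp: nth_equalityI)

lemma Dset_Cons: "Dset (a # x) (b # y) = (if a \<noteq> b then {0} else {}) \<union> Suc ` Dset x y"
proof (rule set_eqI)
  fix j show "j \<in> Dset (a # x) (b # y) \<longleftrightarrow> j \<in> (if a \<noteq> b then {0} else {}) \<union> Suc ` Dset x y"
    unfolding Dset_def by (cases j) auto
qed

lemma ham_Cons: "ham (a # x) (b # y) = (if a \<noteq> b then 1 else 0) + ham x y"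
  unfolding ham_def Dset_Cons by (auto simp: card_image)

lemma length_flip[simp]: "length (flip x j) = length x"
  unfolding flip_def by simp

lemma flip_flip[simp]: "flip (flip x j) j = x"
  unfolding flip_def by (cases "j < length x") (auto simp: list_update_beyond)

lemma flip_commute: "flip (flip x i) j = flip (flip x j) i"
  unfolding flip_def by (cases "i = j") (auto simp: list_update_swap)

lemma Dset_flip: "j < length x \<Longrightarrow> Dset (flip x j) y = Dset x y - {j} \<union> ({j} - Dset x y)"
  unfolding Dset_def flip_def by (auto simp: nth_list_update)

lemma Dset_flip2: "j < length y \<Longrightarrow> length x = length y \<Longrightarrow> Dset x (flip y j) = Dset x y - {j} \<union> ({j} - Dset x y)"
  unfolding Dset_def flip_def by (auto simp: nth_list_update)

lemma Dset_sub: "Dset x y \<subseteq> {..<length x}"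
  unfolding Dset_def by auto

lemma ham_flip_in: "j \<in> Dset x y \<Longrightarrow> ham (flip x j) y = ham x y - 1"
proof -
  assume j: "j \<in> Dset x y"
  then have "j < length x" unfolding Dset_def by auto
  then have "Dset (flip x j) y = Dset x y - {j}" using Dset_flip j by auto
  then show ?thesis unfolding ham_def using j by simp
qed

lemma ham_flip_out: "j < length x \<Longrightarrow> j \<notin> Dset x y \<Longrightarrow> ham (flip x j) y = ham x y + 1"
proof -
  assume j: "j < length x" "j \<notin> Dset x y"
  then have "Dset (flip x j) y = insert j (Dset x y)" using Dset_flip by auto
  then show ?thesis unfolding ham_def using j by simp
qed

lemma ham_flip_self: "j < length x \<Longrightarrow> ham x (flip x j) = 1"
proof -
  assume j: "j < length x"
  have "Dset x (flip x j) = {j}" using j unfolding Dset_def flip_def by (auto simp: nth_list_update)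
  then show ?thesis unfolding ham_def by simp
qed

lemma ham_1_flip: "length x = length y \<Longrightarrow> ham x y = 1 \<Longrightarrow> \<exists>j<length x. y = flip x j"
proof -
  assume l: "length x = length y" and h: "ham x y = 1"
  then obtain j where j: "Dset x y = {j}" unfolding ham_def by (auto simp: card_Suc_eq)
  then have jl: "j < length x" "x ! j \<noteq> y ! j" unfolding Dset_def by auto
  have "y = flip x j"
  proof (rule nth_equalityI)
    show "length y = length (flip x j)" using l by simp
    fix i assume "i < length y"
    then show "y ! i = flip x j ! i" using j jl l unfolding flip_def Dset_def
      by (cases "i = j") (auto simp: nth_list_update)
  qed
  then show ?thesis using jl by auto
qed

lemma ham_triangle: "length x = length z \<Longrightarrow> length z = length y \<Longrightarrow> ham x y \<le> ham x z + ham z y"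
proof -
  assume l: "length x = length z" "length z = length y"
  have "Dset x y \<subseteq> Dset x z \<union> Dset z y" using l unfolding Dset_def by auto
  then have "ham x y \<le> card (Dset x z \<union> Dset z y)" unfolding ham_def by (simp add: card_mono)
  also have "\<dots> \<le> ham x z + ham z y" unfolding ham_def by (rule card_Un_le)
  finally show ?thesis .
qed

lemma near_sym: "length x = length y \<Longrightarrow> near x y \<Longrightarrow> near y x"
  unfolding near_def using ham_sym by metis

lemma length_maj: "length (maj x y z) = min (length x) (min (length y) (length z))"
  by (induction x y z rule: maj.induct) auto

lemma nth_maj: "i < length x \<Longrightarrow> length y = length x \<Longrightarrow> length z = length x \<Longrightarrow>
  maj x y z ! i = ((x!i \<and> y!i) \<or> (y!i \<and> z!i) \<or> (x!i \<and> z!i))"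
proof (induction x y z arbitrary: i rule: maj.induct)
  case (1 a x b y c z)
  then show ?case by (cases i) auto
qed auto

lemma between: "length x = length m \<Longrightarrow> length m = length y \<Longrightarrow> ham x m + ham m y = ham x y
   \<Longrightarrow> j < length x \<Longrightarrow> x ! j = y ! j \<Longrightarrow> m ! j = x ! j"
proof (rule ccontr)
  assume l: "length x = length m" "length m = length y" and s: "ham x m + ham m y = ham x y"
    and j: "j < length x" "x ! j = y ! j" and c: "m ! j \<noteq> x ! j"
  have sub: "Dset x y \<subseteq> (Dset x m \<union> Dset m y) - {j}" using l j unfolding Dset_def by auto
  have jin: "j \<in> Dset x m" "j \<in> Dset m y" using l j c unfolding Dset_def by auto
  have "ham x y \<le> card ((Dset x m \<union> Dset m y) - {j})" unfolding ham_def using sub by (simp add: card_mono)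
  also have "\<dots> = card (Dset x m \<union> Dset m y) - 1" using jin by simp
  finally have 1: "ham x y \<le> card (Dset x m \<union> Dset m y) - 1" .
  have 2: "ham x m + ham m y = card (Dset x m \<union> Dset m y) + card (Dset x m \<inter> Dset m y)"
    unfolding ham_def using card_Un_Int[of "Dset x m" "Dset m y"] by simp
  have 3: "card (Dset x m \<inter> Dset m y) \<ge> 1" using jin by (metis One_nat_def Suc_leI card_gt_0_iff disjoint_iff finite_Dset finite_Int)
  have 4: "card (Dset x m \<union> Dset m y) \<ge> 1" using jin by (metis One_nat_def Suc_leI card_gt_0_iff UnI1 empty_iff finite_Dset finite_Un)
  show False using 1 2 3 4 s by linarith
qed

lemma is_walk_single: "is_walk E u v [w] \<longleftrightarrow> u = w \<and> v = w"
  unfolding is_walk_def by auto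

lemma is_walk_Cons: "xs \<noteq> [] \<Longrightarrow> is_walk E u v (a # xs) \<longleftrightarrow> a = u \<and> E u (hd xs) \<and> is_walk E (hd xs) v xs"
proof -
  assume xs: "xs \<noteq> []"
  show ?thesis
  proof
    assume w: "is_walk E u v (a # xs)"
    then have a: "a = u" unfolding is_walk_def by simp
    have "E ((a#xs) ! 0) ((a#xs) ! Suc 0)" using w xs unfolding is_walk_def by auto
    then have e: "E u (hd xs)" using a xs by (simp add: hd_conv_nth)
    have "is_walk E (hd xs) v xs" unfolding is_walk_def
    proof (intro conjI allI impI)
      show "last xs = v" using w xs unfolding is_walk_def by simp
      fix i assume "Suc i < length xs"
      then have "E ((a#xs) ! Suc i) ((a#xs) ! Suc (Suc i))" using w unfolding is_walk_def by (metis Suc_less_eq length_Cons)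
      then show "E (xs ! i) (xs ! Suc i)" by simp
    qed (use xs in auto)
    then show "a = u \<and> E u (hd xs) \<and> is_walk E (hd xs) v xs" using a e by simp
  next
    assume h: "a = u \<and> E u (hd xs) \<and> is_walk E (hd xs) v xs"
    show "is_walk E u v (a # xs)" unfolding is_walk_def
    proof (intro conjI allI impI)
      show "last (a # xs) = v" using h xs unfolding is_walk_def by simp
      fix i assume i: "Suc i < length (a # xs)"
      show "E ((a # xs) ! i) ((a # xs) ! Suc i)"
      proof (cases i)
        case 0 then show ?thesis using h xs by (simp add: hd_conv_nth)
      next
        case (Suc j) then show ?thesis using h i unfolding is_walk_def by simp
      qed
    qed (use h in auto)
  qed
qed

lemma gdist_le: "is_walk E u v xs \<Longrightarrow> gdist E u v \<le> enat (length xs - 1)"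
  unfolding gdist_def by (rule INF_lower) simp

lemma enat_Inf_in: "A \<noteq> {} \<Longrightarrow> Inf A \<in> (A :: enat set)"
  unfolding Inf_enat_def by (auto intro: LeastI)

lemma gdist_attained: "gdist E u v \<noteq> \<infinity> \<Longrightarrow> \<exists>xs. is_walk E u v xs \<and> gdist E u v = enat (length xs - 1)"
proof -
  assume h: "gdist E u v \<noteq> \<infinity>"
  let ?A = "(\<lambda>xs. enat (length xs - 1)) ` {xs. is_walk E u v xs}"
  have "?A \<noteq> {}"
  proof
    assume "?A = {}"
    then have "gdist E u v = Inf {}" unfolding gdist_def by simp
    then show False using h by (simp add: top_enat_def)
  qed
  then have "Inf ?A \<in> ?A" by (rule enat_Inf_in)
  then show ?thesis unfolding gdist_def by auto
qed

lemma walk_ham: "is_walk (Q_adj n) x y xs \<Longrightarrow> length x = n \<Longrightarrow> ham x y \<le> length xs - 1"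
proof (induction xs arbitrary: x)
  case Nil then show ?case unfolding is_walk_def by simp
next
  case (Cons a xs)
  show ?case
  proof (cases "xs = []")
    case True then show ?thesis using Cons.prems is_walk_single[of "Q_adj n" x y a] by simp
  next
    case False
    then have w: "a = x" "Q_adj n x (hd xs)" "is_walk (Q_adj n) (hd xs) y xs"
      using Cons.prems is_walk_Cons by metis+
    have l: "length (hd xs) = n" using w unfolding Q_adj_def by simp
    have ly: "length y = n"
    proof -
      have "y \<in> set xs" using w(3) False unfolding is_walk_def by auto
      show ?thesis
      proof (cases "length xs = 1")
        case True then have "y = hd xs" using w(3) unfolding is_walk_def
          by (metis False One_nat_def hd_conv_nth last_conv_nth diff_self_eq_0)
        then show ?thesis using l by simp
      next
        case False
        then have "Suc (length xs - 2) < length xs" "length xs - 2 + 1 = length xs - 1" using \<open>xs \<noteq> []\<close>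
          by (cases xs; auto)+
        then have "Q_adj n (xs ! (length xs - 2)) (xs ! (length xs - 1))" using w(3) unfolding is_walk_def
          by (metis Suc_eq_plus1)
        moreover have "xs ! (length xs - 1) = y" using w(3) \<open>xs \<noteq> []\<close> unfolding is_walk_def by (simp add: last_conv_nth)
        ultimately show ?thesis unfolding Q_adj_def by simp
      qed
    qed
    have "ham x y \<le> ham x (hd xs) + ham (hd xs) y" using ham_triangle l Cons.prems ly by simp
    also have "ham x (hd xs) = 1" using w unfolding Q_adj_def ham_def Dset_def by simp
    also have "ham (hd xs) y \<le> length xs - 1" using Cons.IH w(3) l by simp
    finally show ?thesis using False by (cases xs) auto
  qed
qed

lemma walk_exists: "length x = n \<Longrightarrow> length y = n \<Longrightarrow> \<exists>xs. is_walk (Q_adj n) x y xs \<and> length xs = ham x y + 1"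
proof (induction "ham x y" arbitrary: x)
  case 0
  then have "x = y" using ham_0_iff by metis
  then show ?case using is_walk_single[of "Q_adj n" x y x] by (intro exI[of _ "[x]"]) simp
next
  case (Suc d)
  then have "Dset x y \<noteq> {}" unfolding ham_def by auto
  then obtain j where j: "j \<in> Dset x y" by auto
  then have jl: "j < length x" unfolding Dset_def by auto
  let ?x = "flip x j"
  have hd: "ham ?x y = d" using ham_flip_in[OF j] Suc.hyps by simp
  have ex: "\<exists>xs. is_walk (Q_adj n) ?x y xs \<and> length xs = ham ?x y + 1"
    using Suc.hyps(1)[of ?x] hd Suc.prems by simp
  then obtain xs where xs: "is_walk (Q_adj n) ?x y xs" "length xs = d + 1" using hd by auto
  have adj: "Q_adj n x ?x"
  proof -
    have "card (Dset x ?x) = 1" using ham_flip_self[OF jl] unfolding ham_def .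
    then show ?thesis using Suc.prems(1) unfolding Q_adj_def Dset_def by simp
  qed
  have ne: "xs \<noteq> []" using xs by auto
  have "hd xs = ?x" using xs(1) unfolding is_walk_def by simp
  then have w: "is_walk (Q_adj n) x y (x # xs)" using is_walk_Cons[OF ne, of "Q_adj n" x y x] adj xs(1) by simp
  have "length (x # xs) = ham x y + 1" using xs(2) Suc.hyps(2) by simp
  then show ?case using w by blast
qed

lemma gdist_Q: "length x = n \<Longrightarrow> length y = n \<Longrightarrow> gdist (Q_adj n) x y = enat (ham x y)"
proof -
  assume l: "length x = n" "length y = n"
  obtain xs where xs: "is_walk (Q_adj n) x y xs" "length xs = ham x y + 1" using walk_exists[OF l] by auto
  have le: "gdist (Q_adj n) x y \<le> enat (ham x y)" using gdist_le[OF xs(1)] xs(2) by simp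
  then have "gdist (Q_adj n) x y \<noteq> \<infinity>" by (cases "gdist (Q_adj n) x y") auto
  then obtain ys where ys: "is_walk (Q_adj n) x y ys" "gdist (Q_adj n) x y = enat (length ys - 1)"
    using gdist_attained[of "Q_adj n" x y] by auto
  have h: "ham x y \<le> length ys - 1" using walk_ham[OF ys(1) l(1)] .
  have "length ys - 1 \<le> ham x y" using le unfolding ys(2) by simp
  then show ?thesis using h ys(2) by simp
qed

definition msetp :: "nat \<Rightarrow> bool list set \<Rightarrow> bool" where
  "msetp n H \<longleftrightarrow> H \<subseteq> {x. length x = n} \<and> H \<noteq> {} \<and> (\<forall>x\<in>H. \<forall>y\<in>H. \<forall>z\<in>H. maj x y z \<in> H)
     \<and> (\<forall>u\<in>H. \<forall>v\<in>H. u \<noteq> v \<longrightarrow> (\<exists>j\<in>Dset u v. flip u j \<in> H))"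

locale emb =
  fixes V :: "'a set" and E :: "'a \<Rightarrow> 'a \<Rightarrow> bool" and n :: nat and f :: "'a \<Rightarrow> bool list"
  assumes med: "median_graph V E"
    and inj: "inj_on f V" and img: "f ` V \<subseteq> Q_vert n"
    and adj: "\<And>x y. x \<in> V \<Longrightarrow> y \<in> V \<Longrightarrow> E x y \<longleftrightarrow> Q_adj n (f x) (f y)"
    and iso: "\<And>x y. x \<in> V \<Longrightarrow> y \<in> V \<Longrightarrow> gdist E x y = gdist (Q_adj n) (f x) (f y)"
begin

lemma lenf: "x \<in> V \<Longrightarrow> length (f x) = n"
  using img unfolding Q_vert_def by auto

lemma gd: "x \<in> V \<Longrightarrow> y \<in> V \<Longrightarrow> gdist E x y = enat (ham (f x) (f y))"
  using iso gdist_Q lenf by simp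

lemma grph: "graph V E" using med unfolding median_graph_def by simp

lemma H_maj: "u \<in> V \<Longrightarrow> v \<in> V \<Longrightarrow> w \<in> V \<Longrightarrow> maj (f u) (f v) (f w) \<in> f ` V"
proof -
  assume uvw: "u \<in> V" "v \<in> V" "w \<in> V"
  obtain m where m: "m \<in> V" "gdist E u m + gdist E m v = gdist E u v"
    "gdist E u m + gdist E m w = gdist E u w" "gdist E v m + gdist E m w = gdist E v w"
    using med uvw unfolding median_graph_def by metis
  have h1: "ham (f u) (f m) + ham (f m) (f v) = ham (f u) (f v)" using m uvw by (simp add: gd)
  have h2: "ham (f u) (f m) + ham (f m) (f w) = ham (f u) (f w)" using m uvw by (simp add: gd)
  have h3: "ham (f v) (f m) + ham (f m) (f w) = ham (f v) (f w)" using m uvw by (simp add: gd)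
  have "f m = maj (f u) (f v) (f w)"
  proof (rule nth_equalityI)
    show "length (f m) = length (maj (f u) (f v) (f w))" using uvw m lenf by (simp add: length_maj)
    fix j assume "j < length (f m)"
    then have j: "j < n" using lenf m by simp
    have b1: "f u ! j = f v ! j \<Longrightarrow> f m ! j = f u ! j" using between[OF _ _ h1] j lenf uvw m by simp
    have b2: "f u ! j = f w ! j \<Longrightarrow> f m ! j = f u ! j" using between[OF _ _ h2] j lenf uvw m by simp
    have b3: "f v ! j = f w ! j \<Longrightarrow> f m ! j = f v ! j" using between[OF _ _ h3] j lenf uvw m by simp
    show "f m ! j = maj (f u) (f v) (f w) ! j" using nth_maj[of j "f u" "f v" "f w"] j lenf uvw b1 b2 b3
      by auto
  qed
  then show ?thesis using m(1) by (metis image_eqI)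
qed

lemma H_step: "u \<in> V \<Longrightarrow> v \<in> V \<Longrightarrow> u \<noteq> v \<Longrightarrow> \<exists>j\<in>Dset (f u) (f v). flip (f u) j \<in> f ` V"
proof -
  assume uv: "u \<in> V" "v \<in> V" "u \<noteq> v"
  let ?d = "ham (f u) (f v)"
  have fne: "f u \<noteq> f v" using inj uv unfolding inj_on_def by auto
  have dpos: "?d \<ge> 1" using fne ham_0_iff lenf uv by (metis less_one not_le)
  have "gdist E u v \<noteq> \<infinity>" using gd uv by simp
  then obtain xs where xs: "is_walk E u v xs" "gdist E u v = enat (length xs - 1)" using gdist_attained[of E u v] by auto
  have lxs: "length xs = ?d + 1" using xs gd uv dpos by simp
  then have ne: "tl xs \<noteq> []" by (cases xs) (use dpos in auto)
  have xs0: "xs = u # tl xs" using xs(1) unfolding is_walk_def by (cases xs) auto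
  let ?w = "hd (tl xs)"
  have ww: "E u ?w" "is_walk E ?w v (tl xs)" using is_walk_Cons[OF ne, of E u v u] xs(1) xs0 by auto
  have wV: "?w \<in> V" using ww grph unfolding graph_def by blast
  have "gdist E ?w v \<le> enat (length (tl xs) - 1)" using gdist_le[OF ww(2)] .
  then have hw: "ham (f ?w) (f v) \<le> ?d - 1" using gd wV uv lxs by simp
  have "Q_adj n (f u) (f ?w)" using adj uv wV ww by simp
  then have "ham (f u) (f ?w) = 1" unfolding Q_adj_def ham_def Dset_def by simp
  then obtain j where j: "j < n" "f ?w = flip (f u) j" using ham_1_flip lenf uv wV by metis
  have "j \<in> Dset (f u) (f v)"
  proof (rule ccontr)
    assume "j \<notin> Dset (f u) (f v)"
    then have "ham (f ?w) (f v) = ?d + 1" using ham_flip_out j lenf uv by simp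
    then show False using hw by simp
  qed
  then show ?thesis using j wV by force
qed

lemma H_mset: "V \<noteq> {} \<Longrightarrow> msetp n (f ` V)"
  unfolding msetp_def using H_maj H_step lenf by blast

end

definition retr :: "nat \<Rightarrow> bool list set \<Rightarrow> (bool list \<Rightarrow> bool list) \<Rightarrow> bool" where
  "retr n H \<rho> \<longleftrightarrow> (\<forall>x. length x = n \<longrightarrow> \<rho> x \<in> H) \<and> (\<forall>h\<in>H. \<rho> h = h)
     \<and> (\<forall>x y. length x = n \<longrightarrow> length y = n \<longrightarrow> ham x y = 1 \<longrightarrow> near (\<rho> x) (\<rho> y))"

lemma flip_Cons_0[simp]: "flip (a # x) 0 = (\<not> a) # x"
  unfolding flip_def by simp

lemma flip_Cons_Suc[simp]: "flip (a # x) (Suc j) = a # flip x j"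
  unfolding flip_def by simp

lemma Dset_flip_self: "i < length x \<Longrightarrow> Dset x (flip x i) = {i}"
  unfolding Dset_def flip_def by (auto simp: nth_list_update)

lemma near_Cons_same: "near p q \<Longrightarrow> near (b # p) (b # q)"
  unfolding near_def by (auto simp: ham_Cons)

lemma near_Cons_neg: "near (b # p) ((\<not> b) # p)"
  unfolding near_def by (auto simp: ham_Cons)

lemma near_refl[simp]: "near x x"
  unfolding near_def by simp

lemma ham_Cons_1: "length x = length y \<Longrightarrow> ham (a # x) (c # y) = 1 \<Longrightarrow> (a \<noteq> c \<and> x = y) \<or> (a = c \<and> ham x y = 1)"
  using ham_0_iff by (auto simp: ham_Cons split: if_splits)

lemma retr_near: "retr n H \<sigma> \<Longrightarrow> length x = n \<Longrightarrow> length y = n \<Longrightarrow> near x y \<Longrightarrow> near (\<sigma> x) (\<sigma> y)"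
  unfolding retr_def near_def by auto

definition sep :: "nat set \<Rightarrow> bool list \<Rightarrow> bool list \<Rightarrow> nat set" where
  "sep K v x = {j \<in> K. x ! j \<noteq> v ! j}"

definition psi :: "nat set \<Rightarrow> bool list \<Rightarrow> bool list \<Rightarrow> bool list" where
  "psi K v x = (if sep K v x = {} then x else flip x (Min (sep K v x)))"

lemma length_psi[simp]: "length (psi K v x) = length x"
  unfolding psi_def by simp

lemma finite_sep: "K \<subseteq> {..<n} \<Longrightarrow> finite (sep K v x)"
  unfolding sep_def using finite_subset by (metis (no_types, lifting) finite_lessThan mem_Collect_eq subset_iff)

lemma psi_near_self: "K \<subseteq> {..<length x} \<Longrightarrow> near (psi K v x) x"
proof -
  assume K: "K \<subseteq> {..<length x}"
  show ?thesis
  proof (cases "sep K v x = {}")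
    case True then show ?thesis unfolding psi_def by simp
  next
    case False
    then have "Min (sep K v x) \<in> sep K v x" using finite_sep[OF K] by simp
    then have "Min (sep K v x) < length x" using K unfolding sep_def by auto
    then show ?thesis unfolding psi_def near_def using False ham_flip_self ham_sym
      by (metis length_flip)
  qed
qed

lemma sep_flip: "c < length x \<Longrightarrow> sep K v (flip x c) = (if c \<in> K then (sep K v x - {c}) \<union> ({c} - sep K v x) else sep K v x)"
  unfolding sep_def flip_def by (auto simp: nth_list_update)

lemma psi_near_aux: "K \<subseteq> {..<length x} \<Longrightarrow> c \<in> K \<Longrightarrow> c \<notin> sep K v x \<Longrightarrow> near (psi K v x) (psi K v (flip x c))"
proof -
  assume K: "K \<subseteq> {..<length x}" and c: "c \<in> K" "c \<notin> sep K v x"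
  have cl: "c < length x" using K c by auto
  have sy: "sep K v (flip x c) = insert c (sep K v x)" using sep_flip[OF cl] c by auto
  have fin: "finite (sep K v x)" using finite_sep[OF K] .
  show ?thesis
  proof (cases "sep K v x = {}")
    case True
    then have "psi K v (flip x c) = x" unfolding psi_def using sy by simp
    then show ?thesis unfolding psi_def using True by simp
  next
    case False
    let ?j = "Min (sep K v x)"
    have jin: "?j \<in> sep K v x" using False fin by simp
    then have jl: "?j < length x" using K unfolding sep_def by auto
    have mj: "Min (insert c (sep K v x)) = min c ?j" using fin False by (simp add: Min_insert)
    have px: "psi K v x = flip x ?j" unfolding psi_def using False by simp
    show ?thesis
    proof (cases "c < ?j")
      case True
      then have "psi K v (flip x c) = x" unfolding psi_def using sy mj by simp
      then show ?thesis using px ham_flip_self[OF jl] ham_sym unfolding near_def by (metis length_flip)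
    next
      case False
      then have "psi K v (flip x c) = flip (flip x c) ?j" unfolding psi_def using sy mj by (simp add: min_def)
      also have "\<dots> = flip (flip x ?j) c" by (rule flip_commute)
      finally show ?thesis using px ham_flip_self cl unfolding near_def by (metis length_flip)
    qed
  qed
qed

lemma psi_near: "K \<subseteq> {..<length x} \<Longrightarrow> length y = length x \<Longrightarrow> ham x y = 1 \<Longrightarrow> near (psi K v x) (psi K v y)"
proof -
  assume K: "K \<subseteq> {..<length x}" and l: "length y = length x" and h: "ham x y = 1"
  obtain c where c: "c < length x" "y = flip x c" using ham_1_flip[OF l[symmetric] h] by auto
  show ?thesis
  proof (cases "c \<in> K")
    case False
    then have sy: "sep K v y = sep K v x" using sep_flip c by simp
    show ?thesis
    proof (cases "sep K v x = {}")
      case True then show ?thesis unfolding psi_def using sy h by (simp add: near_def)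
    next
      case F: False
      let ?j = "Min (sep K v x)"
      have px: "psi K v x = flip x ?j" unfolding psi_def using F by simp
      have "psi K v y = flip (flip x c) ?j" unfolding psi_def using F sy c by simp
      also have "\<dots> = flip (flip x ?j) c" by (rule flip_commute)
      finally have py: "psi K v y = flip (flip x ?j) c" .
      have "c < length (flip x ?j)" using c by simp
      then have "ham (flip x ?j) (flip (flip x ?j) c) = 1" by (rule ham_flip_self)
      then show ?thesis unfolding near_def px py by simp
    qed
  next
    case True
    show ?thesis
    proof (cases "c \<in> sep K v x")
      case False then show ?thesis using psi_near_aux[OF K True False] c by simp
    next
      case cin: True
      have "c \<notin> sep K v y" using sep_flip[OF c(1)] c cin True by auto
      moreover have Ky: "K \<subseteq> {..<length y}" using K l by simp
      ultimately have "near (psi K v y) (psi K v (flip y c))" using psi_near_aux[OF Ky True] by simp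
      moreover have "flip y c = x" using c by simp
      ultimately have "near (psi K v y) (psi K v x)" by simp
      moreover have "length (psi K v y) = length (psi K v x)" using l by simp
      ultimately show ?thesis using near_sym by blast
    qed
  qed
qed

locale sstep =
  fixes n :: nat and H :: "bool list set"
  assumes ms: "msetp (Suc n) H"
begin

definition P :: "bool \<Rightarrow> bool list set" where "P b = {x. b # x \<in> H}"

lemma Hlen: "h \<in> H \<Longrightarrow> length h = Suc n" using ms unfolding msetp_def by auto

lemma Hmaj: "x \<in> H \<Longrightarrow> y \<in> H \<Longrightarrow> z \<in> H \<Longrightarrow> maj x y z \<in> H" using ms unfolding msetp_def by auto

lemma Hstep: "u \<in> H \<Longrightarrow> v \<in> H \<Longrightarrow> u \<noteq> v \<Longrightarrow> \<exists>j\<in>Dset u v. flip u j \<in> H"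
  using ms unfolding msetp_def by auto

lemma Hne: "H \<noteq> {}" using ms unfolding msetp_def by auto

lemma Pl: "x \<in> P b \<Longrightarrow> length x = n" using Hlen unfolding P_def by fastforce

lemma Hform1: "h \<in> H \<Longrightarrow> h = hd h # tl h"
proof -
  assume h: "h \<in> H"
  then have "h \<noteq> []" using Hlen by fastforce
  then show ?thesis by simp
qed

lemma Hform2: "h \<in> H \<Longrightarrow> tl h \<in> P (hd h)"
  using Hform1[of h] unfolding P_def by (metis mem_Collect_eq)

lemma Pstep: "u \<in> P b \<Longrightarrow> v \<in> P b \<Longrightarrow> u \<noteq> v \<Longrightarrow> \<exists>j\<in>Dset u v. flip u j \<in> P b"
proof -
  assume uv: "u \<in> P b" "v \<in> P b" "u \<noteq> v"
  then obtain j where j: "j \<in> Dset (b # u) (b # v)" "flip (b # u) j \<in> H"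
    using Hstep[of "b # u" "b # v"] unfolding P_def by auto
  then obtain j' where "j = Suc j'" "j' \<in> Dset u v" unfolding Dset_Cons by auto
  then show "\<exists>j\<in>Dset u v. flip u j \<in> P b" using j unfolding P_def by auto
qed

lemma Pmaj: "x \<in> P b \<Longrightarrow> y \<in> P b \<Longrightarrow> z \<in> P b \<Longrightarrow> maj x y z \<in> P b"
proof -
  assume "x \<in> P b" "y \<in> P b" "z \<in> P b"
  then have "maj (b # x) (b # y) (b # z) \<in> H" using Hmaj[of "b # x" "b # y" "b # z"] unfolding P_def by simp
  moreover have "maj (b # x) (b # y) (b # z) = b # maj x y z" by simp
  ultimately show "maj x y z \<in> P b" unfolding P_def by simp
qed

lemma Pm: "P b \<noteq> {} \<Longrightarrow> msetp n (P b)"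
  unfolding msetp_def using Pl Pstep Pmaj by blast

definition Pu where "Pu = P False \<union> P True"

lemma Pu_or: "p \<in> Pu \<Longrightarrow> p \<in> P b \<or> p \<in> P (\<not> b)"
  unfolding Pu_def by (cases b) auto

lemma Pu_iff: "p \<in> Pu \<longleftrightarrow> (\<exists>b. p \<in> P b)"
proof
  assume "p \<in> Pu" then show "\<exists>b. p \<in> P b" unfolding Pu_def by auto
next
  assume "\<exists>b. p \<in> P b"
  then obtain b where "p \<in> P b" by blast
  then show "p \<in> Pu" unfolding Pu_def by (cases b) auto
qed

lemma PuL: "p \<in> Pu \<Longrightarrow> length p = n" using Pu_iff Pl by blast

lemma Pu_maj: "x \<in> Pu \<Longrightarrow> y \<in> Pu \<Longrightarrow> z \<in> Pu \<Longrightarrow> maj x y z \<in> Pu"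
proof -
  assume "x \<in> Pu" "y \<in> Pu" "z \<in> Pu"
  then obtain a b c where "a # x \<in> H" "b # y \<in> H" "c # z \<in> H" using Pu_iff unfolding P_def by auto
  then have "maj (a # x) (b # y) (c # z) \<in> H" using Hmaj[of "a # x" "b # y" "c # z"] by blast
  then have "(a \<and> b \<or> b \<and> c \<or> a \<and> c) # maj x y z \<in> H" by simp
  then show "maj x y z \<in> Pu" using Pu_iff unfolding P_def by auto
qed

lemma Pu_step: "u \<in> Pu \<Longrightarrow> v \<in> Pu \<Longrightarrow> u \<noteq> v \<Longrightarrow> \<exists>j\<in>Dset u v. flip u j \<in> Pu"
proof -
  assume uv: "u \<in> Pu" "v \<in> Pu" "u \<noteq> v"
  then obtain a c where ac: "u \<in> P a" "v \<in> P c" using Pu_iff by auto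
  show "\<exists>j\<in>Dset u v. flip u j \<in> Pu"
  proof (cases "a = c")
    case True then show ?thesis using Pstep ac uv Pu_iff by blast
  next
    case False
    obtain j where j: "j \<in> Dset (a # u) (c # v)" "flip (a # u) j \<in> H"
      using Hstep[of "a # u" "c # v"] ac False unfolding P_def by auto
    show ?thesis
    proof (cases j)
      case 0
      then have "(\<not> a) # u \<in> H" using j by simp
      then have "u \<in> P c" using False unfolding P_def by (cases a; cases c) auto
      then show ?thesis using Pstep ac uv Pu_iff by blast
    next
      case (Suc j')
      then have "j' \<in> Dset u v" "flip u j' \<in> P a" using j unfolding Dset_Cons P_def by (auto split: if_splits)
      then show ?thesis using Pu_iff by blast
    qed
  qed
qed

lemma Pu_m: "P False \<noteq> {} \<Longrightarrow> msetp n Pu"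
proof -
  assume "P False \<noteq> {}"
  then have "Pu \<noteq> {}" unfolding Pu_def by auto
  moreover have "Pu \<subseteq> {x. length x = n}" using PuL by blast
  ultimately show ?thesis unfolding msetp_def using Pu_maj Pu_step by blast
qed

lemma Mne_aux: "u \<in> P False \<Longrightarrow> v \<in> P True \<Longrightarrow> P False \<inter> P True \<noteq> {}"
proof (induction "ham u v" arbitrary: u rule: less_induct)
  case less
  obtain j where j: "j \<in> Dset (False # u) (True # v)" "flip (False # u) j \<in> H"
    using Hstep[of "False # u" "True # v"] less.prems unfolding P_def by auto
  show ?case
  proof (cases j)
    case 0
    then have "u \<in> P True" using j unfolding P_def by simp
    then show ?thesis using less.prems by auto
  next
    case (Suc j')
    then have jj: "j' \<in> Dset u v" "flip u j' \<in> P False" using j unfolding Dset_Cons P_def by (auto split: if_splits)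
    have "ham u v > 0" unfolding ham_def using jj(1) by (auto simp: card_gt_0_iff)
    then have lt: "ham (flip u j') v < ham u v" using ham_flip_in[OF jj(1)] by simp
    show ?thesis using less.hyps[OF lt jj(2) less.prems(2)] .
  qed
qed

lemma F1: "p \<in> P b \<Longrightarrow> p \<notin> P (\<not> b) \<Longrightarrow> p' \<in> P (\<not> b) \<Longrightarrow> p' \<notin> P b \<Longrightarrow> ham p p' = 1 \<Longrightarrow> False"
proof -
  assume a: "p \<in> P b" "p \<notin> P (\<not> b)" "p' \<in> P (\<not> b)" "p' \<notin> P b" "ham p p' = 1"
  have l: "length p = length p'" using Pl[OF a(1)] Pl[OF a(3)] by simp
  obtain i where i: "i < length p" "p' = flip p i" using ham_1_flip[OF l a(5)] by auto
  have "b # p \<noteq> (\<not> b) # p'" by simp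
  then obtain j where j: "j \<in> Dset (b # p) ((\<not> b) # p')" "flip (b # p) j \<in> H"
    using Hstep[of "b # p" "(\<not> b) # p'"] a(1,3) unfolding P_def by blast
  show False
  proof (cases j)
    case 0
    then have "(\<not> b) # p \<in> H" using j by simp
    then show False using a(2) unfolding P_def by simp
  next
    case (Suc j')
    then have "j' \<in> Dset p p'" using j unfolding Dset_Cons by auto
    then have "j' = i" using Dset_flip_self[OF i(1)] i by simp
    then have "b # p' \<in> H" using j Suc i by simp
    then show False using a(4) unfolding P_def by simp
  qed
qed

end

locale sstep2 = sstep +
  fixes S :: "bool \<Rightarrow> bool list \<Rightarrow> bool list" and \<sigma> :: "bool list \<Rightarrow> bool list"
  assumes ne: "\<And>b. P b \<noteq> {}"
    and S: "\<And>b. retr n (P b) (S b)"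
    and \<sigma>: "retr n Pu \<sigma>"
begin

definition m0 where "m0 = (SOME m. m \<in> P False \<and> m \<in> P True)"

lemma m0: "m0 \<in> P False" "m0 \<in> P True"
proof -
  obtain u0 v0 where "u0 \<in> P False" "v0 \<in> P True" using ne by blast
  then have "P False \<inter> P True \<noteq> {}" using Mne_aux by blast
  then have "\<exists>m. m \<in> P False \<and> m \<in> P True" by blast
  then have "m0 \<in> P False \<and> m0 \<in> P True" unfolding m0_def by (rule someI_ex)
  then show "m0 \<in> P False" "m0 \<in> P True" by auto
qed

definition K where "K = {j. j < n \<and> (\<forall>m. m \<in> P False \<longrightarrow> m \<in> P True \<longrightarrow> m ! j = m0 ! j)}"

lemma Kn: "K \<subseteq> {..<n}" unfolding K_def by auto

definition \<psi> where "\<psi> = psi K m0"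

lemma \<psi>l[simp]: "length (\<psi> p) = length p" unfolding \<psi>_def by simp

lemma \<psi>near: "length p = n \<Longrightarrow> near (\<psi> p) p" unfolding \<psi>_def using psi_near_self Kn by simp

lemma \<psi>near2: "length p = n \<Longrightarrow> length q = n \<Longrightarrow> ham p q = 1 \<Longrightarrow> near (\<psi> p) (\<psi> q)"
  unfolding \<psi>_def using psi_near Kn by simp

lemma Sid: "p \<in> P b \<Longrightarrow> S b p = p" using S unfolding retr_def by blast

lemma SH: "length p = n \<Longrightarrow> S b p \<in> P b" using S unfolding retr_def by blast

lemma Snear: "length p = n \<Longrightarrow> length q = n \<Longrightarrow> near p q \<Longrightarrow> near (S b p) (S b q)"
  using retr_near[OF S] by blast

lemma \<sigma>H: "length z = n \<Longrightarrow> \<sigma> z \<in> Pu" using \<sigma> unfolding retr_def by blast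

lemma \<sigma>id: "p \<in> Pu \<Longrightarrow> \<sigma> p = p" using \<sigma> unfolding retr_def by blast

lemma \<sigma>near: "length p = n \<Longrightarrow> length q = n \<Longrightarrow> ham p q = 1 \<Longrightarrow> near (\<sigma> p) (\<sigma> q)"
  using \<sigma> unfolding retr_def by blast

lemma jK: "p \<in> P b \<Longrightarrow> p \<in> P (\<not> b) \<Longrightarrow> p' \<notin> P b \<Longrightarrow> p' \<in> P (\<not> b) \<Longrightarrow> j < n \<Longrightarrow> p' = flip p j \<Longrightarrow> j \<in> K"
proof (rule ccontr)
  assume a: "p \<in> P b" "p \<in> P (\<not> b)" "p' \<notin> P b" "p' \<in> P (\<not> b)" "j < n" "p' = flip p j" and "j \<notin> K"
  then obtain m where m: "m \<in> P False" "m \<in> P True" "m ! j \<noteq> m0 ! j" unfolding K_def by auto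
  define m' where "m' = (if p ! j = m0 ! j then m else m0)"
  have m'1: "m' \<in> P b" unfolding m'_def using m(1,2) m0 by (cases b) simp_all
  have m'2: "m' ! j \<noteq> p ! j" unfolding m'_def using m(3) by auto
  have ln: "length p = n" using Pl[OF a(1)] .
  have l: "length p' = n" using a(6) ln by simp
  have lm: "length m' = n" using Pl[OF m'1] .
  have "maj p p' m' = p'"
  proof (rule nth_equalityI)
    show "length (maj p p' m') = length p'" using l lm ln by (simp add: length_maj)
    fix i assume "i < length (maj p p' m')"
    then have i: "i < length p" using l lm ln by (simp add: length_maj)
    show "maj p p' m' ! i = p' ! i"
    proof (cases "i = j")
      case True
      have "p' ! j = (\<not> p ! j)" using a(5,6) ln unfolding flip_def by simp
      then show ?thesis using nth_maj[of i p p' m'] i l lm ln True m'2 by auto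
    next
      case False
      have "p' ! i = p ! i" using a(6) False unfolding flip_def by simp
      then show ?thesis using nth_maj[of i p p' m'] i l lm ln by auto
    qed
  qed
  moreover have "maj (b # p) ((\<not> b) # p') (b # m') \<in> H"
    using Hmaj[of "b # p" "(\<not> b) # p'" "b # m'"] a(1) a(4) m'1 unfolding P_def by blast
  moreover have "maj (b # p) ((\<not> b) # p') (b # m') = b # maj p p' m'" by simp
  ultimately have "p' \<in> P b" unfolding P_def by simp
  then show False using a(3) by simp
qed

lemma Fc: "p \<in> P b \<Longrightarrow> p \<in> P (\<not> b) \<Longrightarrow> p' \<in> P (\<not> b) \<Longrightarrow> p' \<notin> P b \<Longrightarrow> ham p p' = 1 \<Longrightarrow> \<psi> p' = p"
proof -
  assume a: "p \<in> P b" "p \<in> P (\<not> b)" "p' \<in> P (\<not> b)" "p' \<notin> P b" "ham p p' = 1"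
  have l: "length p = length p'" using Pl[OF a(1)] Pl[OF a(3)] by simp
  have ln: "length p = n" using Pl[OF a(1)] .
  obtain j where j: "j < length p" "p' = flip p j" using ham_1_flip[OF l a(5)] by auto
  have pM1: "p \<in> P False" using a(1,2) by (cases b) simp_all
  have pM2: "p \<in> P True" using a(1,2) by (cases b) simp_all
  have jK: "j \<in> K" using jK[OF a(1,2,4,3)] j ln by simp
  have pK: "\<And>i. i \<in> K \<Longrightarrow> p ! i = m0 ! i" using pM1 pM2 unfolding K_def by blast
  have s1: "\<And>i. i \<in> K \<Longrightarrow> i \<noteq> j \<Longrightarrow> p' ! i = m0 ! i"
  proof -
    fix i assume "i \<in> K" "i \<noteq> j"
    then have "p' ! i = p ! i" using j unfolding flip_def by simp
    then show "p' ! i = m0 ! i" using pK \<open>i \<in> K\<close> by simp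
  qed
  have s2: "p' ! j \<noteq> m0 ! j"
  proof -
    have "p' ! j = (\<not> p ! j)" using j unfolding flip_def by simp
    then show ?thesis using pK[OF jK] by simp
  qed
  have "sep K m0 p' = {j}" using s1 s2 jK unfolding sep_def by auto
  then show "\<psi> p' = p" unfolding \<psi>_def psi_def using j by simp
qed

definition \<tau> where "\<tau> b p = (if p \<in> P b then b # p else (\<not> b) # S (\<not> b) (\<psi> p))"

lemma \<tau>H: "p \<in> Pu \<Longrightarrow> \<tau> b p \<in> H"
proof -
  assume p: "p \<in> Pu"
  then have "length (\<psi> p) = n" using PuL by simp
  then have "S (\<not> b) (\<psi> p) \<in> P (\<not> b)" using SH by blast
  then show "\<tau> b p \<in> H" unfolding \<tau>_def P_def by auto
qed

lemma \<tau>len: "p \<in> Pu \<Longrightarrow> length (\<tau> b p) = Suc n" using \<tau>H Hlen by blast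

lemma \<tau>1a: "p \<in> P b \<Longrightarrow> p \<notin> P (\<not> b) \<Longrightarrow> near (\<tau> b p) (\<tau> (\<not> b) p)"
proof -
  assume a: "p \<in> P b" "p \<notin> P (\<not> b)"
  have ln: "length p = n" using Pl[OF a(1)] .
  have "near (\<psi> p) p" using \<psi>near ln by simp
  then have "near (S b (\<psi> p)) (S b p)" using Snear[of "\<psi> p" p b] ln by simp
  then have n1: "near (S b (\<psi> p)) p" using Sid[OF a(1)] by simp
  have "S b (\<psi> p) \<in> P b" using SH ln by simp
  then have "length (S b (\<psi> p)) = length p" using Pl ln by simp
  then have "near p (S b (\<psi> p))" using near_sym n1 by simp
  moreover have "\<tau> b p = b # p" unfolding \<tau>_def using a by simp
  moreover have "\<tau> (\<not> b) p = b # S b (\<psi> p)" unfolding \<tau>_def using a by simp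
  ultimately show ?thesis by (simp add: near_Cons_same)
qed

lemma \<tau>1: "p \<in> Pu \<Longrightarrow> near (\<tau> b p) (\<tau> (\<not> b) p)"
proof -
  assume p: "p \<in> Pu"
  consider "p \<in> P b" "p \<in> P (\<not> b)" | "p \<in> P b" "p \<notin> P (\<not> b)" | "p \<notin> P b" "p \<in> P (\<not> b)"
    using Pu_or[OF p, of b] by blast
  then show ?thesis
  proof cases
    case 1
    then have "\<tau> b p = b # p" "\<tau> (\<not> b) p = (\<not> b) # p" unfolding \<tau>_def by simp_all
    then show ?thesis by (simp add: near_Cons_neg)
  next
    case 2 then show ?thesis using \<tau>1a by blast
  next
    case 3
    then have "near (\<tau> (\<not> b) p) (\<tau> (\<not> \<not> b) p)" using \<tau>1a[of p "\<not> b"] by simp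
    then have "near (\<tau> (\<not> b) p) (\<tau> b p)" by simp
    then show ?thesis using near_sym \<tau>len[OF p] by metis
  qed
qed

lemma \<tau>2a: "p \<in> P b \<Longrightarrow> p' \<in> Pu \<Longrightarrow> p' \<notin> P b \<Longrightarrow> ham p p' = 1 \<Longrightarrow> near (\<tau> b p) (\<tau> b p')"
proof -
  assume a: "p \<in> P b" "p' \<in> Pu" "p' \<notin> P b" "ham p p' = 1"
  have p'n: "p' \<in> P (\<not> b)" using a(2,3) Pu_or by blast
  have pn: "p \<in> P (\<not> b)" using F1[OF a(1) _ p'n a(3) a(4)] by blast
  have "\<psi> p' = p" using Fc[OF a(1) pn p'n a(3) a(4)] .
  then have "\<tau> b p' = (\<not> b) # p" unfolding \<tau>_def using a(3) Sid[OF pn] by simp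
  moreover have "\<tau> b p = b # p" unfolding \<tau>_def using a(1) by simp
  ultimately show ?thesis by (simp add: near_Cons_neg)
qed

lemma \<tau>2: "p \<in> Pu \<Longrightarrow> p' \<in> Pu \<Longrightarrow> ham p p' = 1 \<Longrightarrow> near (\<tau> b p) (\<tau> b p')"
proof -
  assume a: "p \<in> Pu" "p' \<in> Pu" "ham p p' = 1"
  have ln: "length p = n" "length p' = n" using a PuL by blast+
  consider "p \<in> P b" "p' \<in> P b" | "p \<notin> P b" "p' \<notin> P b" | "p \<in> P b" "p' \<notin> P b" | "p \<notin> P b" "p' \<in> P b"
    by blast
  then show ?thesis
  proof cases
    case 1
    then have "\<tau> b p = b # p" "\<tau> b p' = b # p'" unfolding \<tau>_def by simp_all
    then show ?thesis using a(3) unfolding near_def by (simp add: ham_Cons)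
  next
    case 2
    have "near (\<psi> p) (\<psi> p')" using \<psi>near2 ln a(3) by simp
    then have "near (S (\<not> b) (\<psi> p)) (S (\<not> b) (\<psi> p'))" using Snear ln by simp
    moreover have "\<tau> b p = (\<not> b) # S (\<not> b) (\<psi> p)" "\<tau> b p' = (\<not> b) # S (\<not> b) (\<psi> p')"
      unfolding \<tau>_def using 2 by simp_all
    ultimately show ?thesis by (simp add: near_Cons_same)
  next
    case 3 then show ?thesis using \<tau>2a a by blast
  next
    case 4
    have "ham p' p = 1" using a(3) ln ham_sym by simp
    then have "near (\<tau> b p') (\<tau> b p)" using \<tau>2a 4 a by blast
    then show ?thesis using near_sym \<tau>len a(1,2) by metis
  qed
qed

definition \<rho> where "\<rho> x = \<tau> (hd x) (\<sigma> (tl x))"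

lemma \<rho>_retr: "retr (Suc n) H \<rho>"
  unfolding retr_def
proof (intro conjI allI impI ballI)
  fix x :: "bool list" assume "length x = Suc n"
  then have "\<sigma> (tl x) \<in> Pu" using \<sigma>H by simp
  then show "\<rho> x \<in> H" unfolding \<rho>_def using \<tau>H by simp
next
  fix h assume h: "h \<in> H"
  have hp: "tl h \<in> P (hd h)" using Hform2[OF h] .
  then have "tl h \<in> Pu" using Pu_iff by blast
  then have "\<sigma> (tl h) = tl h" using \<sigma>id by blast
  then have r: "\<rho> h = hd h # tl h" unfolding \<rho>_def \<tau>_def using hp by simp
  show "\<rho> h = h" using r Hform1[OF h] by simp
next
  fix x y :: "bool list" assume xy: "length x = Suc n" "length y = Suc n" "ham x y = 1"
  obtain a x' c y' where xx: "x = a # x'" "y = c # y'" using xy by (cases x; cases y) auto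
  have l: "length x' = n" "length y' = n" using xx xy by auto
  have inPu: "\<sigma> x' \<in> Pu" "\<sigma> y' \<in> Pu" using \<sigma>H l by auto
  have hh: "ham (a # x') (c # y') = 1" using xy xx by simp
  have "(a \<noteq> c \<and> x' = y') \<or> (a = c \<and> ham x' y' = 1)" using ham_Cons_1[OF _ hh] l by simp
  then consider "a \<noteq> c" "x' = y'" | "a = c" "ham x' y' = 1" by blast
  then show "near (\<rho> x) (\<rho> y)"
  proof cases
    case 1
    then have "c = (\<not> a)" by auto
    then have "\<rho> y = \<tau> (\<not> a) (\<sigma> x')" unfolding \<rho>_def xx using 1 by simp
    moreover have "\<rho> x = \<tau> a (\<sigma> x')" unfolding \<rho>_def xx by simp
    ultimately show ?thesis using \<tau>1[OF inPu(1), of a] by simp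
  next
    case 2
    have rx: "\<rho> x = \<tau> a (\<sigma> x')" "\<rho> y = \<tau> a (\<sigma> y')" unfolding \<rho>_def xx using 2 by simp_all
    have "near (\<sigma> x') (\<sigma> y')" using \<sigma>near l 2 by blast
    then consider "\<sigma> x' = \<sigma> y'" | "ham (\<sigma> x') (\<sigma> y') = 1" unfolding near_def by blast
    then show ?thesis
    proof cases
      case 1 then show ?thesis using rx by simp
    next
      case 2 then show ?thesis using rx \<tau>2[OF inPu 2, of a] by simp
    qed
  qed
qed

end

theorem retract: "msetp n H \<Longrightarrow> \<exists>\<rho>. retr n H \<rho>"
proof (induction n arbitrary: H)
  case 0
  then have "H = {[]}" unfolding msetp_def by auto
  then show ?case unfolding retr_def by (intro exI[of _ "\<lambda>_. []"]) (auto simp: ham_def Dset_def)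
next
  case (Suc n)
  interpret sstep n H using Suc.prems by unfold_locales
  show ?case
  proof (cases "\<exists>b. P (\<not> b) = {}")
    case True
    then obtain b where b: "P (\<not> b) = {}" by auto
    obtain h where h: "h \<in> H" using Hne by auto
    have h2: "tl h \<in> P (hd h)" using Hform2[OF h] .
    have hb: "hd h = b" using h2 b by (cases "hd h"; cases b) auto
    then have "P b \<noteq> {}" using h2 by auto
    then obtain \<sigma> where \<sigma>: "retr n (P b) \<sigma>" using Suc.IH Pm by blast
    define \<rho> where "\<rho> x = b # \<sigma> (tl x)" for x
    have "retr (Suc n) H \<rho>" unfolding retr_def
    proof (intro conjI allI impI ballI)
      fix x :: "bool list" assume "length x = Suc n"
      then have "\<sigma> (tl x) \<in> P b" using \<sigma> unfolding retr_def by simp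
      then show "\<rho> x \<in> H" unfolding \<rho>_def P_def by simp
    next
      fix h assume h: "h \<in> H"
      have h2: "tl h \<in> P (hd h)" using Hform2[OF h] .
      have hb: "hd h = b" using h2 b by (cases "hd h"; cases b) auto
      have "\<sigma> (tl h) = tl h" using h2 hb \<sigma> unfolding retr_def by auto
      then have r: "\<rho> h = hd h # tl h" unfolding \<rho>_def using hb by simp
      show "\<rho> h = h" using r Hform1[OF h] by simp
    next
      fix x y :: "bool list" assume xy: "length x = Suc n" "length y = Suc n" "ham x y = 1"
      obtain a x' c y' where xx: "x = a # x'" "y = c # y'" using xy by (cases x; cases y) auto
      have l: "length x' = n" "length y' = n" using xx xy by auto
      have hh: "ham (a # x') (c # y') = 1" using xy xx by simp
      have "(a \<noteq> c \<and> x' = y') \<or> (a = c \<and> ham x' y' = 1)" using ham_Cons_1[OF _ hh] l by simp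
      then have "near x' y'" unfolding near_def by blast
      then have "near (\<sigma> x') (\<sigma> y')" using retr_near[OF \<sigma> l] by simp
      then show "near (\<rho> x) (\<rho> y)" unfolding \<rho>_def xx by (simp add: near_Cons_same)
    qed
    then show ?thesis by blast
  next
    case False
    have ne: "\<And>b. P b \<noteq> {}"
    proof -
      fix b
      have "P (\<not> \<not> b) \<noteq> {}" using False by blast
      then show "P b \<noteq> {}" by simp
    qed
    have "\<forall>b. \<exists>\<sigma>. retr n (P b) \<sigma>" using Suc.IH Pm ne by blast
    then obtain S where S: "\<And>b. retr n (P b) (S b)" by metis
    obtain \<sigma> where \<sigma>: "retr n Pu \<sigma>" using Suc.IH Pu_m ne by blast
    interpret sstep2 n H S \<sigma> using ne S \<sigma> by unfold_locales
    show ?thesis using \<rho>_retr by blast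
  qed
qed

definition blk :: "nat \<Rightarrow> nat \<Rightarrow> nat set" where
  "blk n i = {j. j < n \<and> j div 2 = i}"

definition outs :: "nat \<Rightarrow> nat \<Rightarrow> bool list \<Rightarrow> bool list \<Rightarrow> nat set" where
  "outs n i y r = Dset y r - blk n i"

definition mi :: "nat \<Rightarrow> nat \<Rightarrow> bool list \<Rightarrow> bool list \<Rightarrow> nat" where
  "mi n i y r = (if outs n i y r \<noteq> {} then card (outs n i y r) + 2 else if Dset y r = blk n i then 0 else 1)"

definition strat :: "nat \<Rightarrow> nat \<Rightarrow> bool list \<Rightarrow> bool list \<Rightarrow> bool list" where
  "strat n i y r = (if outs n i y r \<noteq> {} then flip y (Min (outs n i y r)) else if card (Dset y r) \<le> 1 then r else y)"

definition mu :: "nat \<Rightarrow> (nat \<Rightarrow> bool list) \<Rightarrow> bool list \<Rightarrow> nat" where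
  "mu n Y r = (\<Sum>i < n div 2 + 1. mi n i (Y i) r)"

lemma blk_sub: "blk n i \<subseteq> {2 * i, 2 * i + 1}"
  unfolding blk_def by auto

lemma finite_blk[simp]: "finite (blk n i)"
  using blk_sub finite_subset by blast

lemma card_blk: "card (blk n i) \<le> 2"
proof -
  have "card (blk n i) \<le> card {2 * i, 2 * i + 1}" by (rule card_mono[OF _ blk_sub]) simp
  also have "\<dots> \<le> 2" by (simp add: card_insert_le_m1)
  finally show ?thesis .
qed

lemma card_blk_last: "card (blk n (n div 2)) \<le> 1"
proof -
  have "blk n (n div 2) \<subseteq> {2 * (n div 2)}" unfolding blk_def by auto
  then have "card (blk n (n div 2)) \<le> card {2 * (n div 2)}" by (rule card_mono[rotated]) simp
  then show ?thesis by simp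
qed

lemma finite_outs[simp]: "finite (outs n i y r)"
  unfolding outs_def by simp

lemma Dset_len: "length y = n \<Longrightarrow> Dset y r \<subseteq> {..<n}"
  unfolding Dset_def by auto

lemma strat_cases:
  assumes l: "length y = n" "length r' = n"
    and nc: "strat n i y r' \<noteq> r'"
  shows "(outs n i y r' \<noteq> {} \<and> strat n i y r' = flip y (Min (outs n i y r')))
       \<or> (outs n i y r' = {} \<and> strat n i y r' = y \<and> Dset y r' = blk n i \<and> card (blk n i) = 2)"
proof (cases "outs n i y r' = {}")
  case False then show ?thesis unfolding strat_def by simp
next
  case True
  then have c: "\<not> card (Dset y r') \<le> 1" and s: "strat n i y r' = y" using nc unfolding strat_def by (auto split: if_splits)
  have sub: "Dset y r' \<subseteq> blk n i" using True Dset_len[OF l(1), of r'] unfolding outs_def blk_def by auto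
  have "card (Dset y r') \<le> card (blk n i)" using sub by (rule card_mono[OF finite_blk])
  then have "card (Dset y r') = card (blk n i)" "card (blk n i) = 2" using c card_blk[of n i] by auto
  then have "Dset y r' = blk n i" using sub card_subset_eq[OF finite_blk sub] by simp
  then show ?thesis using True s \<open>card (blk n i) = 2\<close> by simp
qed

lemma strat_near:
  assumes l: "length y = n" "length r' = n"
  shows "near y (strat n i y r') \<and> length (strat n i y r') = n"
proof (cases "outs n i y r' = {}")
  case False
  let ?j = "Min (outs n i y r')"
  have "?j \<in> outs n i y r'" using False by simp
  then have "?j < n" using Dset_len[OF l(1), of r'] unfolding outs_def by auto
  then show ?thesis using False l ham_flip_self[of ?j y] unfolding strat_def near_def by simp
next
  case True
  show ?thesis
  proof (cases "card (Dset y r') \<le> 1")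
    case True
    then have "ham y r' \<le> 1" unfolding ham_def .
    then have "ham y r' = 0 \<or> ham y r' = 1" by auto
    then have "near y r'" unfolding near_def using ham_0_iff l by auto
    then show ?thesis using True \<open>outs n i y r' = {}\<close> l unfolding strat_def by simp
  next
    case False then show ?thesis using True l unfolding strat_def by simp
  qed
qed

lemma mi_flip:
  assumes l: "length y = n" "length r' = n" and o: "outs n i y r' \<noteq> {}"
  shows "mi n i (flip y (Min (outs n i y r'))) r' =
    (if card (outs n i y r') > 1 then card (outs n i y r') + 1
     else if Dset y r' - {Min (outs n i y r')} = blk n i then 0 else 1)"
proof -
  let ?o = "outs n i y r'" and ?j = "Min (outs n i y r')"
  have jo: "?j \<in> ?o" using o by simp
  have oe: "?o = Dset y r' - blk n i" by (simp add: outs_def)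
  have jD: "?j \<in> Dset y r'" "?j \<notin> blk n i" using jo oe by auto
  then have jl: "?j < length y" unfolding Dset_def by auto
  have D2: "Dset (flip y ?j) r' = Dset y r' - {?j}" using Dset_flip[OF jl] jD by auto
  have o2: "outs n i (flip y ?j) r' = ?o - {?j}"
  proof -
    have "outs n i (flip y ?j) r' = Dset (flip y ?j) r' - blk n i" by (rule outs_def)
    also have "\<dots> = (Dset y r' - {?j}) - blk n i" by (simp only: D2)
    also have "\<dots> = ?o - {?j}" using oe by auto
    finally show ?thesis .
  qed
  have c: "card (?o - {?j}) = card ?o - 1" using jo by simp
  have ne: "?o - {?j} \<noteq> {} \<longleftrightarrow> card ?o > 1"
  proof
    assume "?o - {?j} \<noteq> {}"
    then have "card (?o - {?j}) > 0" by (simp add: card_gt_0_iff)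
    then show "card ?o > 1" using c by simp
  next
    assume "card ?o > 1"
    then have "card (?o - {?j}) > 0" using c by simp
    then show "?o - {?j} \<noteq> {}" by (metis card.empty less_irrefl)
  qed
  have "card ?o > 0" using o by (simp add: card_gt_0_iff)
  then show ?thesis unfolding mi_def o2 D2 using ne c by auto
qed

lemma outs_step:
  assumes l: "length y = n" "length r = n" and a: "a < n" "r' = flip r a"
  shows "Dset y r' = Dset y r - {a} \<union> ({a} - Dset y r)"
    "outs n i y r' = (if a \<in> blk n i then outs n i y r else outs n i y r - {a} \<union> ({a} - Dset y r))"
proof -
  show D: "Dset y r' = Dset y r - {a} \<union> ({a} - Dset y r)" using Dset_flip2[of a r y] a l by simp
  show "outs n i y r' = (if a \<in> blk n i then outs n i y r else outs n i y r - {a} \<union> ({a} - Dset y r))"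
    unfolding outs_def D by auto
qed

lemma percop:
  assumes l: "length y = n" "length r = n" "length r' = n"
    and mv: "r' = r \<or> (\<exists>a<n. r' = flip r a)"
    and nc: "strat n i y r' \<noteq> r'"
  shows "mi n i (strat n i y r') r' \<le> mi n i y r"
    and "r' = r \<Longrightarrow> outs n i y r \<noteq> {} \<Longrightarrow> mi n i (strat n i y r') r' < mi n i y r"
    and "a < n \<Longrightarrow> r' = flip r a \<Longrightarrow> a div 2 = i \<Longrightarrow> mi n i (strat n i y r') r' < mi n i y r"
proof -
  let ?o = "outs n i y r" and ?o' = "outs n i y r'"
  have card_o': "card ?o' \<le> card ?o + 1 \<and> (?o = {} \<longrightarrow> ?o' \<noteq> {} \<longrightarrow> (\<exists>a. a < n \<and> r' = flip r a \<and> ?o' = {a} \<and> a \<notin> blk n i \<and> a \<notin> Dset y r \<and> Dset y r' = insert a (Dset y r)))"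
  proof (cases "r' = r")
    case True then show ?thesis by simp
  next
    case False
    then obtain a where a: "a < n" "r' = flip r a" using mv by auto
    note os = outs_step[OF l(1,2) a]
    have "?o' \<subseteq> insert a ?o" using os(2) by auto
    then have "card ?o' \<le> card (insert a ?o)" by (rule card_mono[rotated]) simp
    also have "\<dots> \<le> card ?o + 1" by (simp add: card_insert_le_m1)
    finally have c1: "card ?o' \<le> card ?o + 1" .
    have c2: "?o = {} \<longrightarrow> ?o' \<noteq> {} \<longrightarrow> (\<exists>a. a < n \<and> r' = flip r a \<and> ?o' = {a} \<and> a \<notin> blk n i \<and> a \<notin> Dset y r \<and> Dset y r' = insert a (Dset y r))"
    proof (intro impI)
      assume o: "?o = {}" and o': "?o' \<noteq> {}"
      have an: "a \<notin> blk n i" using o o' os(2) by (auto split: if_splits)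
      then have "?o' = {a} - Dset y r" using os(2) o by simp
      then have "a \<notin> Dset y r" "?o' = {a}" using o' by auto
      moreover have "Dset y r' = insert a (Dset y r)" using os(1) \<open>a \<notin> Dset y r\<close> by auto
      ultimately show "\<exists>a. a < n \<and> r' = flip r a \<and> ?o' = {a} \<and> a \<notin> blk n i \<and> a \<notin> Dset y r \<and> Dset y r' = insert a (Dset y r)"
        using a an by blast
    qed
    show ?thesis using c1 c2 by blast
  qed
  have sc: "(?o' \<noteq> {} \<and> strat n i y r' = flip y (Min ?o'))
       \<or> (?o' = {} \<and> strat n i y r' = y \<and> Dset y r' = blk n i \<and> card (blk n i) = 2)"
    using strat_cases[OF l(1,3) nc] .
  show le: "mi n i (strat n i y r') r' \<le> mi n i y r"
  proof (cases "?o' = {}")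
    case True
    then have "mi n i (strat n i y r') r' = 0" using sc unfolding mi_def by auto
    then show ?thesis by simp
  next
    case False
    then have s: "strat n i y r' = flip y (Min ?o')" using sc by auto
    note mf = mi_flip[OF l(1,3) False]
    show ?thesis
    proof (cases "card ?o' > 1")
      case True
      then have "?o \<noteq> {}" using card_o' by auto
      then have "mi n i y r = card ?o + 2" unfolding mi_def by simp
      then show ?thesis using mf True s card_o' by simp
    next
      case c1: False
      show ?thesis
      proof (cases "?o = {}")
        case False
        then have "mi n i y r = card ?o + 2" unfolding mi_def by simp
        then show ?thesis using mf c1 s by auto
      next
        case True
        then obtain a where a: "a < n" "r' = flip r a" "?o' = {a}" "a \<notin> blk n i" "a \<notin> Dset y r"
          "Dset y r' = insert a (Dset y r)"
          using card_o' \<open>?o' \<noteq> {}\<close> by blast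
        have e1: "Dset y r' - {Min ?o'} = Dset y r" using a by auto
        have m1: "mi n i y r = (if Dset y r = blk n i then 0 else 1)" unfolding mi_def using True by simp
        have "mi n i (strat n i y r') r' = (if Dset y r' - {Min ?o'} = blk n i then 0 else 1)" using mf c1 s by simp
        then show ?thesis using m1 e1 by simp
      qed
    qed
  qed
  have strict_o: "?o' = ?o \<Longrightarrow> ?o \<noteq> {} \<Longrightarrow> mi n i (strat n i y r') r' < mi n i y r"
  proof -
    assume e: "?o' = ?o" and o: "?o \<noteq> {}"
    then have s: "strat n i y r' = flip y (Min ?o')" using sc by auto
    have mi0: "mi n i y r = card ?o + 2" unfolding mi_def using o by simp
    have o'ne: "?o' \<noteq> {}" using e o by simp
    have "mi n i (flip y (Min ?o')) r' \<le> card ?o' + 1" using mi_flip[OF l(1,3) o'ne] by auto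
    then show ?thesis using e s mi0 by simp
  qed
  show "r' = r \<Longrightarrow> ?o \<noteq> {} \<Longrightarrow> mi n i (strat n i y r') r' < mi n i y r"
    using strict_o by simp
  show "a < n \<Longrightarrow> r' = flip r a \<Longrightarrow> a div 2 = i \<Longrightarrow> mi n i (strat n i y r') r' < mi n i y r"
  proof -
    assume a: "a < n" "r' = flip r a" "a div 2 = i"
    have ab: "a \<in> blk n i" unfolding blk_def using a by simp
    note os = outs_step[OF l(1,2) a(1,2)]
    have e: "?o' = ?o" using os(2) ab by simp
    show ?thesis
    proof (cases "?o = {}")
      case False then show ?thesis using strict_o e by simp
    next
      case True
      then have "?o' = {}" using e by simp
      then have st: "strat n i y r' = y" "Dset y r' = blk n i" using sc by auto
      have "Dset y r = Dset y r' - {a}" using os(1) st(2) ab by auto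
      then have "Dset y r \<noteq> blk n i" using st(2) ab by auto
      then have "mi n i y r = 1" unfolding mi_def using True by simp
      moreover have "mi n i (strat n i y r') r' = 0" unfolding mi_def using st \<open>?o' = {}\<close> by simp
      ultimately show ?thesis by simp
    qed
  qed
qed

lemma mu_dec:
  assumes l: "\<And>i. i < n div 2 + 1 \<Longrightarrow> length (Y i) = n" "length r = n" "length r' = n"
    and mv: "r' = r \<or> (\<exists>a<n. r' = flip r a)"
    and nc: "\<And>i. i < n div 2 + 1 \<Longrightarrow> strat n i (Y i) r' \<noteq> r'"
  shows "mu n (\<lambda>i. strat n i (Y i) r') r' < mu n Y r"
proof -
  let ?A = "{..<n div 2 + 1}"
  have le: "\<forall>i\<in>?A. mi n i (strat n i (Y i) r') r' \<le> mi n i (Y i) r"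
    using percop(1)[OF l(1) l(2,3) mv nc] by auto
  have ex: "\<exists>i\<in>?A. mi n i (strat n i (Y i) r') r' < mi n i (Y i) r"
  proof (cases "r' = r")
    case True
    show ?thesis
    proof (cases "\<exists>i\<in>?A. outs n i (Y i) r \<noteq> {}")
      case True
      then obtain i where i: "i \<in> ?A" "outs n i (Y i) r \<noteq> {}" by blast
      then show ?thesis using percop(2)[OF l(1) l(2,3) mv nc \<open>r' = r\<close>] by auto
    next
      case False
      let ?i = "n div 2"
      have "?i \<in> ?A" by simp
      then have "outs n ?i (Y ?i) r' = {}" using False True by auto
      then have "card (blk n ?i) = 2" using strat_cases[OF l(1) l(3) nc, of ?i] by auto
      then show ?thesis using card_blk_last[of n] by simp
    qed
  next
    case False
    then obtain a where a: "a < n" "r' = flip r a" using mv by auto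
    let ?i = "a div 2"
    have "?i \<in> ?A" using a(1) by (simp add: less_Suc_eq_le div_le_mono)
    then show ?thesis using percop(3)[OF l(1) l(2,3) mv nc a(1,2)] by auto
  qed
  show ?thesis unfolding mu_def using sum_strict_mono_ex1[OF _ le ex] by simp
qed

definition copsl :: "'a set \<Rightarrow> ('a \<Rightarrow> bool list) \<Rightarrow> (bool list \<Rightarrow> bool list) \<Rightarrow> nat \<Rightarrow> (nat \<Rightarrow> bool list) \<Rightarrow> 'a list" where
  "copsl V f \<rho> n Y = map (\<lambda>i. inv_into V f (\<rho> (Y i))) [0..<n div 2 + 1]"

lemma Q_adj_ham: "Q_adj n x y \<longleftrightarrow> length x = n \<and> length y = n \<and> ham x y = 1"
  unfolding Q_adj_def ham_def Dset_def by auto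

context emb
begin

lemma g_f: "v \<in> V \<Longrightarrow> inv_into V f (f v) = v"
  using inj by (simp add: inv_into_f_f)

lemma f_g: "h \<in> f ` V \<Longrightarrow> f (inv_into V f h) = h \<and> inv_into V f h \<in> V"
  by (simp add: f_inv_into_f inv_into_into)

lemma near_E: "h1 \<in> f ` V \<Longrightarrow> h2 \<in> f ` V \<Longrightarrow> near h1 h2 \<Longrightarrow>
   inv_into V f h2 = inv_into V f h1 \<or> E (inv_into V f h1) (inv_into V f h2)"
proof -
  assume h: "h1 \<in> f ` V" "h2 \<in> f ` V" "near h1 h2"
  show ?thesis
  proof (cases "h1 = h2")
    case True then show ?thesis by simp
  next
    case False
    then have hh: "ham h1 h2 = 1" using h(3) unfolding near_def by simp
    have l: "length h1 = n" "length h2 = n" using h(1,2) lenf by auto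
    have "Q_adj n h1 h2" using hh l Q_adj_ham by simp
    then have "Q_adj n (f (inv_into V f h1)) (f (inv_into V f h2))" using f_g h by simp
    then have "E (inv_into V f h1) (inv_into V f h2)" using adj f_g h by simp
    then show ?thesis by simp
  qed
qed

lemma game:
  assumes rho: "retr n (f ` V) \<rho>"
  shows "(\<forall>i<n div 2 + 1. length (Y i) = n) \<Longrightarrow> r \<in> V \<Longrightarrow> (r' = r \<or> E r r') \<Longrightarrow>
     r' \<in> set (copsl V f \<rho> n Y) \<or> cops_win_from V E (copsl V f \<rho> n Y) r'"
proof (induction "mu n Y (f r)" arbitrary: Y r r' rule: less_induct)
  case less
  have r'V: "r' \<in> V" using less.prems(2,3) grph unfolding graph_def by blast
  have lr: "length (f r) = n" "length (f r') = n" using lenf less.prems(2) r'V by auto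
  show ?case
  proof (cases "r' \<in> set (copsl V f \<rho> n Y)")
    case True then show ?thesis by simp
  next
    case False
    define Y' where "Y' i = strat n i (Y i) (f r')" for i
    have sn: "\<And>i. i < n div 2 + 1 \<Longrightarrow> near (Y i) (Y' i) \<and> length (Y' i) = n"
      unfolding Y'_def using strat_near less.prems(1) lr by blast
    have inH: "\<And>x. length x = n \<Longrightarrow> \<rho> x \<in> f ` V" using rho unfolding retr_def by blast
    have step: "cop_step E (copsl V f \<rho> n Y) (copsl V f \<rho> n Y')"
      unfolding cop_step_def
    proof (rule list_all2_all_nthI)
      show "length (copsl V f \<rho> n Y) = length (copsl V f \<rho> n Y')" unfolding copsl_def by simp
      fix i assume "i < length (copsl V f \<rho> n Y)"
      then have i: "i < n div 2 + 1" unfolding copsl_def by simp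
      have e1: "copsl V f \<rho> n Y ! i = inv_into V f (\<rho> (Y i))"
      proof -
        have "copsl V f \<rho> n Y ! i = (\<lambda>i. inv_into V f (\<rho> (Y i))) (0 + i)"
          unfolding copsl_def by (rule nth_map_upt) (use i in simp)
        then show ?thesis by simp
      qed
      have e2: "copsl V f \<rho> n Y' ! i = inv_into V f (\<rho> (Y' i))"
      proof -
        have "copsl V f \<rho> n Y' ! i = (\<lambda>i. inv_into V f (\<rho> (Y' i))) (0 + i)"
          unfolding copsl_def by (rule nth_map_upt) (use i in simp)
        then show ?thesis by simp
      qed
      have ly: "length (Y i) = n" using less.prems(1) i by blast
      have ny: "near (Y i) (Y' i)" "length (Y' i) = n" using sn[OF i] by auto
      have nr: "near (\<rho> (Y i)) (\<rho> (Y' i))" using retr_near[OF rho ly ny(2) ny(1)] .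
      have h1: "\<rho> (Y i) \<in> f ` V" using inH[OF ly] .
      have h2: "\<rho> (Y' i) \<in> f ` V" using inH[OF ny(2)] .
      show "copsl V f \<rho> n Y' ! i = copsl V f \<rho> n Y ! i \<or> E (copsl V f \<rho> n Y ! i) (copsl V f \<rho> n Y' ! i)"
        unfolding e1 e2 using near_E[OF h1 h2 nr] .
    qed
    have mv: "f r' = f r \<or> (\<exists>a<n. f r' = flip (f r) a)"
    proof (cases "r' = r")
      case True then show ?thesis by simp
    next
      case False
      then have "E r r'" using less.prems(3) by simp
      then have "Q_adj n (f r) (f r')" using adj less.prems(2) r'V by simp
      then have "ham (f r) (f r') = 1" using Q_adj_ham by simp
      then show ?thesis using ham_1_flip lr by metis
    qed
    show ?thesis
    proof (rule disjI2, rule cops_win_from.intros[OF step])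
      show "r' \<in> set (copsl V f \<rho> n Y') \<or> (\<forall>r''. r'' = r' \<or> E r' r'' \<longrightarrow> r'' \<in> set (copsl V f \<rho> n Y') \<or> cops_win_from V E (copsl V f \<rho> n Y') r'')"
      proof (cases "\<exists>i<n div 2 + 1. Y' i = f r'")
        case True
        then obtain i where i: "i < n div 2 + 1" "Y' i = f r'" by blast
        have "\<rho> (f r') = f r'" using rho r'V unfolding retr_def by blast
        then have "inv_into V f (\<rho> (Y' i)) = r'" using i g_f r'V by simp
        moreover have "inv_into V f (\<rho> (Y' i)) \<in> set (copsl V f \<rho> n Y')"
          unfolding copsl_def set_map set_upt by (rule imageI) (use i in simp)
        ultimately show ?thesis by simp
      next
        case False
        have nc: "\<And>i. i < n div 2 + 1 \<Longrightarrow> strat n i (Y i) (f r') \<noteq> f r'" using False unfolding Y'_def by blast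
        have "mu n (\<lambda>i. strat n i (Y i) (f r')) (f r') < mu n Y (f r)"
          using mu_dec[of n Y "f r" "f r'"] less.prems(1) lr mv nc by blast
        then have lt: "mu n Y' (f r') < mu n Y (f r)" unfolding Y'_def by simp
        have lY': "\<forall>i<n div 2 + 1. length (Y' i) = n" using sn by blast
        show ?thesis using less.hyps[OF lt lY' r'V] by blast
      qed
    qed
  qed
qed

end

theorem corollary4p1:
  fixes V :: "'a set" and E :: "'a \<Rightarrow> 'a \<Rightarrow> bool" and n :: nat
  assumes "median_graph V E"
    and "isometric_embeds_in_Q V E n"
  shows "real (cop_number V E) \<le> real_of_int \<lceil>real (n + 1) / 2\<rceil>"
proof -
  obtain f where f: "inj_on f V" "f ` V \<subseteq> Q_vert n"
      "\<forall>x\<in>V. \<forall>y\<in>V. E x y \<longleftrightarrow> Q_adj n (f x) (f y)"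
      "\<forall>x\<in>V. \<forall>y\<in>V. gdist E x y = gdist (Q_adj n) (f x) (f y)"
    using assms(2) unfolding isometric_embeds_in_Q_def by blast
  interpret emb V E n f using assms(1) f by unfold_locales auto
  have cn: "cop_number V E \<le> n div 2 + 1"
  proof (cases "V = {}")
    case True
    have "cops_win V E 0" unfolding cops_win_def using True by (intro exI[of _ "[]"]) simp
    then have "cop_number V E \<le> 0" unfolding cop_number_def by (rule Least_le)
    then show ?thesis by simp
  next
    case False
    obtain \<rho> where rho: "retr n (f ` V) \<rho>" using retract H_mset[OF False] by blast
    obtain v0 where v0: "v0 \<in> V" using False by blast
    let ?Y = "\<lambda>i::nat. f v0"
    have "\<rho> (f v0) = f v0" using rho v0 unfolding retr_def by blast
    then have c0: "\<And>i. inv_into V f (\<rho> (?Y i)) = v0" using g_f v0 by simp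
    have "cops_win V E (n div 2 + 1)" unfolding cops_win_def
    proof (intro exI[of _ "copsl V f \<rho> n ?Y"] conjI ballI)
      show "length (copsl V f \<rho> n ?Y) = n div 2 + 1" unfolding copsl_def by simp
      show "set (copsl V f \<rho> n ?Y) \<subseteq> V" unfolding copsl_def using c0 v0 by auto
      fix r assume r: "r \<in> V"
      show "r \<in> set (copsl V f \<rho> n ?Y) \<or> cops_win_from V E (copsl V f \<rho> n ?Y) r"
        using game[OF rho, of ?Y r r] r lenf v0 by blast
    qed
    then show ?thesis unfolding cop_number_def by (rule Least_le)
  qed
  have h2: "2 * (n div 2) \<le> n" by simp
  then have "2 * real (n div 2) \<le> real n" by (metis of_nat_le_iff of_nat_mult of_nat_numeral)
  then have "real (n div 2) < real (n + 1) / 2" by simp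
  then have "int (n div 2 + 1) \<le> \<lceil>real (n + 1) / 2\<rceil>" by (simp add: le_ceiling_iff)
  then have "real (n div 2 + 1) \<le> real_of_int \<lceil>real (n + 1) / 2\<rceil>" by linarith
  then show ?thesis using cn by linarith
qed

end
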